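(* In the setting described in the context, the mapping $\psi^b$ is a monotone $(1-\min\{2\beta,1/2\})$-CRS with regards to $h$.
   Context: Let $I=\{1,\dots,n\}$ be a set of items, $B$ a positive integer, $[B]=\{1,\dots,B\}$, $[0;B]=\{0,1,\dots,B\}$; for $u,w\in[0;B]^I$, $u\le w$ means coordinatewise. Let $f:[0;B]^I\to\mathbb{R}_{\ge0}$ be monotone and lattice submodular. Each item $i$ has a random state $\Phi(i)\in[B]$, independent across items, with known distribution $p_i(s)=\Pr[\Phi(i)=s]$. Item $i$ in state $s$ has a nonnegative integer cost $c_i(s)$, with $c_i(s)\ge c_i(s')$ whenever $s\ge s'$. $C$ is a positive integer budget and $\mathcal{I}^{out}\subseteq 2^I$ is a downward-closed family. For $S\subseteq I$ and a realization $\phi\in[B]^I$, $\phi_S\in[0;B]^I$ equals $\phi(i)$ for $i\in S$ and $0$ otherwise; $\overline{f}(S)=\mathbb{E}[f(\Phi_S)]$, and $F(\overline{x})=\sum_{U\subseteq I}\prod_{i\in U}\overline{x}(i)\prod_{i\notin U}(1-\overline{x}(i))\overline{f}(U)$. Let $P_{\mathcal{I}^{out}}=\mathrm{conv}\{\mathbf{1}_S: S\in\mathcal{I}^{out}\}$. A monotone $(\beta,\gamma)$-balanced CRS for $\mathcal{I}^{out}$ is a (possibly randomized) scheme that, for any $\overline{z}\in\beta\cdot P_{\mathcal{I}^{out}}$ and the random set $R$ containing each $i$ independently with probability $\overline{z}(i)$, maps $R$ to $\chi(R)\subseteq R$ with $\chi(R)\in\mathcal{I}^{out}$, such that $\Pr[i\in\chi(R)\mid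 i\in R]\ge\gamma$ for all $i$, and for $i\in R\subseteq R'$, $\Pr[i\in\chi(R)]\ge\Pr[i\in\chi(R')]$. Assume such a scheme exists for given $\beta,\gamma\in[0,1]$. Problem P1: variables $x(i,t)\ge0$ for $i\in I$, $t\in\{1,\dots,C-c_i(B)\}$, with $\overline{x}(i)=\sum_{t=1}^{C-c_i(B)}x(i,t)$; maximize $F(\overline{x})$ subject to $\overline{x}(i)\le1$, $\overline{x}\in P_{\mathcal{I}^{out}}$, and for all $t\in\{1,\dots,C\}$: $\sum_{i\in I}\mathbb{E}[\min\{c_i(\Phi(i)),t\}]\sum_{t'=1}^{t}x(i,t')\le 2t$. Let $y$ be the solution of P1 computed by the stochastic continuous greedy algorithm of Asadpour and Nazerzadeh (2016) with stopping time $l=\min\{\beta,1/4\}$ and step size $\delta=o(n^{-3})$, with $\overline{y}(i)=\sum_t y(i,t)$. Distribution $h$: the random vector $v\in[0;B]^I$ has independent coordinates with $\Pr[v(i)=j]=p_i(j)\overline{y}(i)$ for $j\in[B]$ and $\Pr[v(i)=0]=1-\overline{y}(i)$. Let $R(v)=\{i: v(i)\ne0\}$. Mapping $\psi^b$: for each $i\in R(v)$ independently sample a starting time $t(i)\in\{1,\dots,C-c_i(B)\}$ with $\Pr[t(i)=t]=y(i,t)/\overline{y}(i)$. Set $\psi^b(v)(i)=0$ for $i\notin R(v)$; for $i\in R(v)$ set $\psi^b(v)(i)=v(i)$ if $\sum_{i'\in R(v)\setminus\{i\},\ t(i')\le t(i)}c_{i'}(v(i'))\le t(i)$, and $\psi^b(v)(i)=0$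 otherwise. An $\alpha$-CRS with regards to $h$ is a (possibly randomized) mapping $\psi$ on $[0;B]^I$ with $\psi(v)(i)\in\{0,v(i)\}$ for all $i$, and $\Pr[\psi(v)(i)=j\mid v(i)=j]\ge\alpha$ for all $i\in I$, $j\in[B]$ (probability over $v\sim h$ and the randomness of $\psi$). It is monotone if for all $u,w$ with $u(i)=w(i)$ and $u\le w$, $\Pr[\psi(u)(i)=u(i)]\ge\Pr[\psi(w)(i)=w(i)]$ (probability over the randomness of $\psi$ only). *)

theory Defs
  imports "HOL-Probability.Probability"
begin

definition vec_dom :: "nat set \<Rightarrow> nat \<Rightarrow> (nat \<Rightarrow> nat) set" where
  "vec_dom I B = {v. \<forall>i. (i \<in> I \<longrightarrow> v i \<le> B) \<and> (i \<notin> I \<longrightarrow> v i = 0)}"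

text \<open>alpha-CRS with regards to h (randomised map = map to a pmf of outcomes).
  The conditional probability Pr[psi(v)(i)=j | v(i)=j] >= alpha is written multiplicatively.\<close>
definition alpha_CRS ::
  "nat set \<Rightarrow> nat \<Rightarrow> (nat \<Rightarrow> nat) pmf \<Rightarrow> ((nat \<Rightarrow> nat) \<Rightarrow> (nat \<Rightarrow> nat) pmf) \<Rightarrow> real \<Rightarrow> bool" where
  "alpha_CRS I B h \<psi> \<alpha> \<longleftrightarrow>
     (\<forall>v \<in> vec_dom I B. \<forall>w \<in> set_pmf (\<psi> v). \<forall>i. w i = 0 \<or> w i = v i) \<and>
     (\<forall>i \<in> I. \<forall>j \<in> {1..B}.
        measure_pmf.prob (bind_pmf h (\<lambda>v. map_pmf (\<lambda>w. (v, w)) (\<psi> v))) {(v, w). w i = j \<and> v i = j}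
          \<ge> \<alpha> * measure_pmf.prob h {v. v i = j})"

definition monotone_CRS ::
  "nat set \<Rightarrow> nat \<Rightarrow> ((nat \<Rightarrow> nat) \<Rightarrow> (nat \<Rightarrow> nat) pmf) \<Rightarrow> bool" where
  "monotone_CRS I B \<psi> \<longleftrightarrow>
     (\<forall>u \<in> vec_dom I B. \<forall>w \<in> vec_dom I B. \<forall>i \<in> I.
        u i = w i \<and> (\<forall>k. u k \<le> w k) \<longrightarrow>
        measure_pmf.prob (\<psi> u) {x. x i = u i} \<ge> measure_pmf.prob (\<psi> w) {x. x i = w i})"

definition ybar :: "(nat \<Rightarrow> nat \<Rightarrow> real) \<Rightarrow> nat \<Rightarrow> (nat \<Rightarrow> nat \<Rightarrow> nat) \<Rightarrow> nat \<Rightarrow> nat \<Rightarrow> real" where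
  "ybar y C c B i = (\<Sum>t = 1..C - c i B. y i t)"

text \<open>Distribution h: independent coordinates, v(i)=j w.p. p_i(j)*ybar(i), v(i)=0 w.p. 1-ybar(i).
  p i is the distribution of the state Phi(i).\<close>
definition h_dist ::
  "nat set \<Rightarrow> (nat \<Rightarrow> nat pmf) \<Rightarrow> (nat \<Rightarrow> nat \<Rightarrow> real) \<Rightarrow> nat \<Rightarrow> (nat \<Rightarrow> nat \<Rightarrow> nat) \<Rightarrow> nat
     \<Rightarrow> (nat \<Rightarrow> nat) pmf" where
  "h_dist I p y C c B = Pi_pmf I 0
     (\<lambda>i. bind_pmf (bernoulli_pmf (ybar y C c B i)) (\<lambda>b. if b then p i else return_pmf 0))"

definition R_set :: "nat set \<Rightarrow> (nat \<Rightarrow> nat) \<Rightarrow> nat set" where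
  "R_set I v = {i \<in> I. v i \<noteq> 0}"

text \<open>Starting time distribution: Pr[t(i)=t] = y(i,t)/ybar(i) on {1..C - c_i(B)}.
  (When ybar(i)=0 the paper leaves it undefined; we use an arbitrary default.)\<close>
definition start_pmf :: "(nat \<Rightarrow> nat \<Rightarrow> real) \<Rightarrow> nat \<Rightarrow> (nat \<Rightarrow> nat \<Rightarrow> nat) \<Rightarrow> nat \<Rightarrow> nat \<Rightarrow> nat pmf" where
  "start_pmf y C c B i =
     (if ybar y C c B i > 0
      then embed_pmf (\<lambda>t. if t \<in> {1..C - c i B} then y i t / ybar y C c B i else 0)
      else return_pmf 1)"

definition psi_out :: "nat set \<Rightarrow> (nat \<Rightarrow> nat \<Rightarrow> nat) \<Rightarrow> (nat \<Rightarrow> nat) \<Rightarrow> (nat \<Rightarrow> nat) \<Rightarrow> nat \<Rightarrow> nat" where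
  "psi_out I c v st i =
     (if i \<in> R_set I v \<and>
         (\<Sum>i' \<in> {i' \<in> R_set I v - {i}. st i' \<le> st i}. c i' (v i')) \<le> st i
      then v i else 0)"

definition psi_b ::
  "nat set \<Rightarrow> (nat \<Rightarrow> nat \<Rightarrow> real) \<Rightarrow> nat \<Rightarrow> (nat \<Rightarrow> nat \<Rightarrow> nat) \<Rightarrow> nat \<Rightarrow> (nat \<Rightarrow> nat) \<Rightarrow> (nat \<Rightarrow> nat) pmf" where
  "psi_b I y C c B v = map_pmf (\<lambda>st. psi_out I c v st) (Pi_pmf (R_set I v) 0 (start_pmf y C c B))"

end

theory Submission
  imports Defs
begin



lemma sum_min_ge:
  fixes f :: "'a \<Rightarrow> nat"
  assumes "finite A" "t < (\<Sum>a\<in>A. f a)"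
  shows "t \<le> (\<Sum>a\<in>A. min (f a) t)"
proof (cases "\<exists>a\<in>A. t < f a")
  case True
  then obtain a where a: "a \<in> A" "t < f a" by blast
  have "min (f a) t \<le> (\<Sum>a\<in>A. min (f a) t)"
    using assms(1) a(1) by (intro member_le_sum) auto
  then show ?thesis using a by simp
next
  case False
  then have "(\<Sum>a\<in>A. min (f a) t) = (\<Sum>a\<in>A. f a)"
    by (intro sum.cong) auto
  then show ?thesis using assms by simp
qed

lemma psi_b_eq:
  assumes "finite I"
  shows "psi_b I y C c B v = map_pmf (psi_out I c v) (Pi_pmf I 0 (start_pmf y C c B))"
proof -
  have sub: "R_set I v \<subseteq> I" by (auto simp: R_set_def)
  have "psi_b I y C c B v = map_pmf (psi_out I c v)
      (map_pmf (\<lambda>f x. if x \<in> R_set I v then f x else 0) (Pi_pmf I 0 (start_pmf y C c B)))"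
    unfolding psi_b_def using assms sub by (subst Pi_pmf_subset[of I "R_set I v"]) auto
  also have "\<dots> = map_pmf (psi_out I c v) (Pi_pmf I 0 (start_pmf y C c B))"
    unfolding pmf.map_comp o_def
  proof (intro map_pmf_cong refl)
    fix st
    show "psi_out I c v (\<lambda>x. if x \<in> R_set I v then st x else 0) = psi_out I c v st"
    proof
      fix i
      have "(\<Sum>i' \<in> {i' \<in> R_set I v - {i}. (\<lambda>x. if x \<in> R_set I v then st x else 0) i' \<le> (\<lambda>x. if x \<in> R_set I v then st x else 0) i}. c i' (v i'))
          = (\<Sum>i' \<in> {i' \<in> R_set I v - {i}. st i' \<le> st i}. c i' (v i'))" if "i \<in> R_set I v"
        using that by (intro sum.cong) auto
      then show "psi_out I c v (\<lambda>x. if x \<in> R_set I v then st x else 0) i = psi_out I c v st i"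
        unfolding psi_out_def by (cases "i \<in> R_set I v") auto
    qed
  qed
  finally show ?thesis .
qed



lemma joint_eq:
  "bind_pmf h (\<lambda>v. map_pmf (\<lambda>w. (v, w)) (map_pmf (F v) S)) = map_pmf (\<lambda>(v,st). (v, F v st)) (pair_pmf h S)"
  by (simp add: pair_pmf_def map_bind_pmf bind_map_pmf map_pmf_def bind_assoc_pmf bind_return_pmf)

lemma pair_decomp:
  assumes "finite A" "i \<notin> A"
  shows "pair_pmf (Pi_pmf (insert i A) d q) (Pi_pmf (insert i A) d s) =
    bind_pmf (q i) (\<lambda>a. bind_pmf (s i) (\<lambda>t. bind_pmf (Pi_pmf A d q) (\<lambda>f. bind_pmf (Pi_pmf A d s)
      (\<lambda>g. return_pmf (f(i:=a), g(i:=t))))))"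
  using assms
  apply (simp add: Pi_pmf_insert' pair_pmf_def bind_assoc_pmf bind_return_pmf)
  apply (subst bind_commute_pmf[of "Pi_pmf A d q"])
  apply simp
  done



lemma start_facts:
  fixes y :: "nat \<Rightarrow> nat \<Rightarrow> real"
  assumes nn: "\<And>t. 0 \<le> y k t" and supp: "\<And>t. t \<notin> {1..C - c k B} \<Longrightarrow> y k t = 0" and C: "C \<ge> 1"
  shows "set_pmf (start_pmf y C c B k) \<subseteq> {1..C}"
    and "emeasure (start_pmf y C c B k) {..t} * ennreal (ybar y C c B k) = ennreal (\<Sum>t'=1..t. y k t')"
proof -
  let ?K = "C - c k B"
  let ?yb = "ybar y C c B k"
  let ?F = "\<lambda>t. if t \<in> {1..?K} then y k t / ?yb else 0"
  have ybnn: "0 \<le> ?yb" unfolding ybar_def by (intro sum_nonneg nn)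
  have Fnn: "\<And>t. 0 \<le> ?F t" using ybnn nn by auto
  have Fsum: "?yb > 0 \<Longrightarrow> (\<integral>\<^sup>+t. ennreal (?F t) \<partial>count_space UNIV) = 1"
  proof -
    assume pos: "?yb > 0"
    have "(\<integral>\<^sup>+t. ennreal (?F t) \<partial>count_space UNIV) = (\<Sum>t\<in>{1..?K}. ennreal (?F t))"
      by (intro nn_integral_count_space') auto
    also have "\<dots> = ennreal (\<Sum>t\<in>{1..?K}. ?F t)"
      by (rule sum_ennreal) (rule Fnn)
    also have "(\<Sum>t\<in>{1..?K}. ?F t) = (\<Sum>t\<in>{1..?K}. y k t) / ?yb"
      by (simp add: sum_divide_distrib)
    also have "\<dots> = 1" using pos unfolding ybar_def by simp
    finally show ?thesis by simp
  qed
  have pmfs: "?yb > 0 \<Longrightarrow> pmf (start_pmf y C c B k) t = ?F t" for t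
    unfolding start_pmf_def using Fnn Fsum by (simp add: pmf_embed_pmf)
  show "set_pmf (start_pmf y C c B k) \<subseteq> {1..C}"
  proof (cases "?yb > 0")
    case True
    show ?thesis
    proof
      fix t assume "t \<in> set_pmf (start_pmf y C c B k)"
      then have "pmf (start_pmf y C c B k) t \<noteq> 0" by (simp add: set_pmf_eq)
      then show "t \<in> {1..C}" using pmfs[OF True, of t] by (auto split: if_splits)
    qed
  next
    case False
    then show ?thesis using C unfolding start_pmf_def by simp
  qed
  show "emeasure (start_pmf y C c B k) {..t} * ennreal ?yb = ennreal (\<Sum>t'=1..t. y k t')"
  proof (cases "?yb > 0")
    case True
    have "emeasure (start_pmf y C c B k) {..t} = (\<Sum>s\<in>{..t}. ennreal (?F s))"
      using pmfs[OF True] apply (simp add: emeasure_measure_pmf_finite) by (rule sum_ennreal[symmetric]) (use Fnn in auto)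
    also have "\<dots> = ennreal (\<Sum>s\<in>{..t}. ?F s)" by (rule sum_ennreal) (rule Fnn)
    also have "(\<Sum>s\<in>{..t}. ?F s) = (\<Sum>s\<in>{..t}. y k s) / ?yb"
      unfolding sum_divide_distrib using supp by (intro sum.cong) auto
    also have "(\<Sum>s\<in>{..t}. y k s) = (\<Sum>s=1..t. y k s)"
    proof -
      have "{..t} = insert 0 {1..t}" by auto
      then show ?thesis using supp[of 0] by simp
    qed
    finally show ?thesis using True
      by (simp add: ennreal_mult''[symmetric] sum_nonneg nn)
  next
    case False
    then have yb0: "?yb = 0" using ybnn by simp
    have "\<forall>s\<in>{1..?K}. y k s = 0"
      using yb0 unfolding ybar_def by (subst sum_nonneg_eq_0_iff[symmetric]) (auto intro: nn)
    then have y0: "y k s = 0" for s using supp[of s] by (cases "s \<in> {1..?K}") auto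
    have "(\<Sum>t'=1..t. y k t') = 0" by (simp add: y0)
    then show ?thesis using yb0 by simp
  qed
qed



lemma q_int:
  fixes yb :: real and P :: "nat pmf" and B :: nat and cc :: "nat \<Rightarrow> nat"
  assumes "0 \<le> yb" "yb \<le> 1" "set_pmf P \<subseteq> {1..B}"
  shows "(\<integral>\<^sup>+x. ennreal (if x \<noteq> 0 then real (min (cc x) t) else 0)
            \<partial>bind_pmf (bernoulli_pmf yb) (\<lambda>b. if b then P else return_pmf 0))
        = ennreal yb * ennreal (measure_pmf.expectation P (\<lambda>s. real (min (cc s) t)))"
proof -
  have fin: "finite (set_pmf P)" by (rule finite_subset[OF assms(3)]) simp
  have "(\<integral>\<^sup>+x. ennreal (if x \<noteq> 0 then real (min (cc x) t) else 0) \<partial>P)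
      = (\<integral>\<^sup>+x. ennreal (real (min (cc x) t)) \<partial>P)"
  proof (rule nn_integral_cong_AE)
    have "\<forall>x\<in>set_pmf P. ennreal (if x \<noteq> 0 then real (min (cc x) t) else 0) = ennreal (real (min (cc x) t))"
    proof
      fix x assume "x \<in> set_pmf P"
      then have "x \<in> {1..B}" using assms(3) by (rule subsetD[rotated])
      then have "x \<noteq> 0" by simp
      then show "ennreal (if x \<noteq> 0 then real (min (cc x) t) else 0) = ennreal (real (min (cc x) t))" by simp
    qed
    then show "AE x in measure_pmf P. ennreal (if x \<noteq> 0 then real (min (cc x) t) else 0) = ennreal (real (min (cc x) t))"
      unfolding AE_measure_pmf_iff .
  qed
  also have "\<dots> = ennreal (measure_pmf.expectation P (\<lambda>s. real (min (cc s) t)))"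
    by (rule nn_integral_eq_integral[OF integrable_measure_pmf_finite[OF fin]]) simp
  finally have *: "(\<integral>\<^sup>+x. ennreal (if x \<noteq> 0 then real (min (cc x) t) else 0) \<partial>P) = 
      ennreal (measure_pmf.expectation P (\<lambda>s. real (min (cc s) t)))" .
  have "(\<integral>\<^sup>+x. ennreal (if x \<noteq> 0 then real (min (cc x) t) else 0)
            \<partial>bind_pmf (bernoulli_pmf yb) (\<lambda>b. if b then P else return_pmf 0))
     = (\<integral>\<^sup>+b. (if b then ennreal (measure_pmf.expectation P (\<lambda>s. real (min (cc s) t))) else 0) \<partial>bernoulli_pmf yb)"
    unfolding nn_integral_bind_pmf
  proof (intro nn_integral_cong)
    fix b show "(\<integral>\<^sup>+x. ennreal (if x \<noteq> 0 then real (min (cc x) t) else 0) \<partial>(if b then P else return_pmf 0))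
       = (if b then ennreal (measure_pmf.expectation P (\<lambda>s. real (min (cc s) t))) else 0)"
    proof (cases b)
      case True then show ?thesis using * by simp
    next
      case False then show ?thesis by simp
    qed
  qed
  also have "\<dots> = ennreal (measure_pmf.expectation P (\<lambda>s. real (min (cc s) t))) * ennreal yb + 0 * ennreal (1 - yb)"
    by (subst nn_integral_bernoulli_pmf) (use assms(1,2) in auto)
  also have "\<dots> = ennreal yb * ennreal (measure_pmf.expectation P (\<lambda>s. real (min (cc s) t)))"
    by (simp add: mult.commute)
  finally show ?thesis .
qed

lemma int_component:
  assumes "finite A" "k \<in> A"
  shows "(\<integral>\<^sup>+g. F (g k) \<partial>Pi_pmf A d s) = (\<integral>\<^sup>+x. F x \<partial>s k)"
proof -
  have "map_pmf (\<lambda>g. g k) (Pi_pmf A d s) = s k" using assms by (simp add: Pi_pmf_component)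
  then have "(\<integral>\<^sup>+x. F x \<partial>map_pmf (\<lambda>g. g k) (Pi_pmf A d s)) = (\<integral>\<^sup>+x. F x \<partial>s k)" by simp
  then show ?thesis by simp
qed



lemma mono_part:
  assumes finI: "finite I" and cost_mono: "\<And>i s s'. i \<in> I \<Longrightarrow> s' \<le> s \<Longrightarrow> c i s' \<le> c i s"
  shows "monotone_CRS I B (psi_b I y C c B)"
  unfolding monotone_CRS_def
proof (intro ballI impI)
  fix u w i assume uw: "u \<in> vec_dom I B" "w \<in> vec_dom I B" "i \<in> I" and le: "u i = w i \<and> (\<forall>k. u k \<le> w k)"
  let ?S = "Pi_pmf I 0 (start_pmf y C c B)"
  show "measure_pmf.prob (psi_b I y C c B w) {x. x i = w i} \<le> measure_pmf.prob (psi_b I y C c B u) {x. x i = u i}"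
  proof (cases "u i = 0")
    case True
    have "psi_out I c u -` {x. x i = u i} = UNIV"
      using True by (auto simp: psi_out_def)
    then have "measure_pmf.prob (psi_b I y C c B u) {x. x i = u i} = 1"
      using finI by (simp add: psi_b_eq)
    then show ?thesis by simp
  next
    case False
    have sub: "psi_out I c w -` {x. x i = w i} \<subseteq> psi_out I c u -` {x. x i = u i}"
    proof
      fix st assume "st \<in> psi_out I c w -` {x. x i = w i}"
      then have w1: "psi_out I c w st i = w i" by simp
      have iw: "i \<in> R_set I w" and sw: "(\<Sum>i' \<in> {i' \<in> R_set I w - {i}. st i' \<le> st i}. c i' (w i')) \<le> st i"
        using w1 False le unfolding psi_out_def by (auto split: if_splits)
      have iu: "i \<in> R_set I u" using False uw(3) by (simp add: R_set_def)
      have RR: "R_set I u \<subseteq> R_set I w" using le by (auto simp: R_set_def intro: less_le_trans)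
      have "(\<Sum>i' \<in> {i' \<in> R_set I u - {i}. st i' \<le> st i}. c i' (u i'))
          \<le> (\<Sum>i' \<in> {i' \<in> R_set I u - {i}. st i' \<le> st i}. c i' (w i'))"
        using le cost_mono by (intro sum_mono) (auto simp: R_set_def)
      also have "\<dots> \<le> (\<Sum>i' \<in> {i' \<in> R_set I w - {i}. st i' \<le> st i}. c i' (w i'))"
        using RR finI by (intro sum_mono2) (auto simp: R_set_def)
      finally have "(\<Sum>i' \<in> {i' \<in> R_set I u - {i}. st i' \<le> st i}. c i' (u i')) \<le> st i"
        using sw by linarith
      then show "st \<in> psi_out I c u -` {x. x i = u i}" using iu by (simp add: psi_out_def)
    qed
    have "measure_pmf.prob ?S (psi_out I c w -` {x. x i = w i}) \<le> measure_pmf.prob ?S (psi_out I c u -` {x. x i = u i})"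
      by (rule measure_pmf.finite_measure_mono[OF sub]) simp
    then show ?thesis using finI
      by (simp only: psi_b_eq measure_map_pmf)
  qed
qed




lemma alpha_part:
  fixes I :: "nat set" and B C :: nat and p :: "nat \<Rightarrow> nat pmf" and c :: "nat \<Rightarrow> nat \<Rightarrow> nat"
    and y :: "nat \<Rightarrow> nat \<Rightarrow> real" and l :: real
  assumes finI: "finite I" and C_pos: "C \<ge> 1"
    and states: "\<And>i. i \<in> I \<Longrightarrow> set_pmf (p i) \<subseteq> {1..B}"
    and y_nonneg: "\<And>i t. 0 \<le> y i t"
    and y_supp: "\<And>i t. i \<notin> I \<or> t \<notin> {1..C - c i B} \<Longrightarrow> y i t = 0"
    and y_box: "\<And>i. i \<in> I \<Longrightarrow> ybar y C c B i \<le> l" and l0: "0 \<le> l" and l14: "l \<le> 1/4"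
    and y_knap: "\<And>t. t \<in> {1..C} \<Longrightarrow>
        (\<Sum>i \<in> I. measure_pmf.expectation (p i) (\<lambda>s. real (min (c i s) t)) * (\<Sum>t' = 1..t. y i t'))
          \<le> l * (2 * real t)"
  shows "alpha_CRS I B (h_dist I p y C c B) (psi_b I y C c B) (1 - 2 * l)"
proof -
  define q where "q = (\<lambda>k. bind_pmf (bernoulli_pmf (ybar y C c B k)) (\<lambda>b. if b then p k else return_pmf (0::nat)))"
  define s where "s = start_pmf y C c B"
  define E where "E = (\<lambda>k t. measure_pmf.expectation (p k) (\<lambda>s. real (min (c k s) t)))"
  have h_eq: "h_dist I p y C c B = Pi_pmf I 0 q" unfolding h_dist_def q_def ..
  have ybnn: "\<And>k. 0 \<le> ybar y C c B k" unfolding ybar_def by (intro sum_nonneg y_nonneg)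
  have yb1: "\<And>k. k \<in> I \<Longrightarrow> ybar y C c B k \<le> 1" using y_box l14 by force
  have s_supp: "\<And>k. k \<in> I \<Longrightarrow> set_pmf (s k) \<subseteq> {1..C}"
    unfolding s_def by (rule start_facts(1)) (use y_nonneg y_supp C_pos in auto)
  have s_meas: "\<And>k t. k \<in> I \<Longrightarrow> emeasure (s k) {..t} * ennreal (ybar y C c B k) = ennreal (\<Sum>t'=1..t. y k t')"
    unfolding s_def by (rule start_facts(2)) (use y_nonneg y_supp C_pos in auto)
  have q_int': "\<And>k t. k \<in> I \<Longrightarrow> (\<integral>\<^sup>+x. ennreal (if x \<noteq> 0 then real (min (c k x) t) else 0) \<partial>q k)
        = ennreal (ybar y C c B k) * ennreal (E k t)"
    unfolding q_def E_def by (rule q_int) (use ybnn yb1 states in auto)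
  have Enn: "\<And>k t. 0 \<le> E k t" unfolding E_def by (intro Bochner_Integration.integral_nonneg) simp
  show ?thesis unfolding alpha_CRS_def
  proof (intro conjI ballI allI)
    fix v w i assume "v \<in> vec_dom I B" "w \<in> set_pmf (psi_b I y C c B v)"
    then show "w i = 0 \<or> w i = v i" using psi_b_eq[OF finI] by (auto simp: psi_out_def)
  next
    fix i j assume i: "i \<in> I" and j: "j \<in> {1..B}"
    define S where "S = Pi_pmf I 0 s"
    define H where "H = Pi_pmf I 0 q"
    define P where "P = pair_pmf H S"
    have joint: "bind_pmf (h_dist I p y C c B) (\<lambda>v. map_pmf (\<lambda>w. (v, w)) (psi_b I y C c B v))
        = map_pmf (\<lambda>(v,st). (v, psi_out I c v st)) P"
      unfolding P_def H_def S_def h_eq s_def psi_b_eq[OF finI] by (rule joint_eq)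
    define A where "A = {(v::nat\<Rightarrow>nat, st::nat\<Rightarrow>nat). v i = j}"
    define G where "G = {(v::nat\<Rightarrow>nat, st::nat\<Rightarrow>nat). v i = j \<and> psi_out I c v st i = j}"
    define Bd where "Bd = {(v::nat\<Rightarrow>nat, st::nat\<Rightarrow>nat). v i = j \<and> psi_out I c v st i \<noteq> j}"
    have lhs: "measure_pmf.prob (bind_pmf (h_dist I p y C c B) (\<lambda>v. map_pmf (\<lambda>w. (v, w)) (psi_b I y C c B v)))
        {(v, w). w i = j \<and> v i = j} = measure_pmf.prob P G"
    proof -
      have "(\<lambda>(v,st). (v, psi_out I c v st)) -` {(v, w). w i = j \<and> v i = j} = G"
        by (auto simp: G_def)
      then show ?thesis unfolding joint by simp
    qed
    have rhs: "measure_pmf.prob (h_dist I p y C c B) {v. v i = j} = measure_pmf.prob P A"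
    proof -
      have "measure_pmf.prob P A = measure_pmf.prob (map_pmf fst P) {v. v i = j}"
        by (simp add: A_def vimage_def case_prod_unfold)
      then show ?thesis unfolding P_def map_fst_pair_pmf H_def h_eq by simp
    qed
    have split: "measure_pmf.prob P A = measure_pmf.prob P G + measure_pmf.prob P Bd"
    proof -
      have "A = G \<union> Bd" "G \<inter> Bd = {}" by (auto simp: A_def G_def Bd_def)
      then show ?thesis by (simp add: measure_pmf.finite_measure_Union)
    qed
    have eA: "emeasure P A = emeasure (q i) {j}"
    proof -
      have "emeasure P A = emeasure (map_pmf fst P) {v. v i = j}"
        by (simp add: A_def vimage_def case_prod_unfold)
      also have "\<dots> = emeasure (map_pmf (\<lambda>v. v i) H) {j}"
        unfolding P_def map_fst_pair_pmf by (simp add: vimage_def)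
      also have "map_pmf (\<lambda>v. v i) H = q i" unfolding H_def using finI i by (simp add: Pi_pmf_component)
      finally show ?thesis .
    qed
    have eB: "emeasure P Bd \<le> ennreal (2 * l) * emeasure (q i) {j}"
    proof -
      define I' where "I' = I - {i}"
      have II: "I = insert i I'" "i \<notin> I'" "finite I'" using i finI by (auto simp: I'_def)
      define H' where "H' = Pi_pmf I' 0 q"
      define S' where "S' = Pi_pmf I' 0 s"
      have Pdec: "P = bind_pmf (q i) (\<lambda>a. bind_pmf (s i) (\<lambda>t. bind_pmf H' (\<lambda>f. bind_pmf S'
           (\<lambda>g. return_pmf (f(i:=a), g(i:=t))))))"
        unfolding P_def H_def S_def H'_def S'_def II(1) by (rule pair_decomp[OF II(3) II(2)])
      have inner: "(\<integral>\<^sup>+f. \<integral>\<^sup>+g. indicator Bd (f(i:=a), g(i:=t)) \<partial>S' \<partial>H') \<le> indicator {j} a * ennreal (2*l)"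
        if t1: "1 \<le> t" and tC: "t \<le> C" for a t
      proof (cases "a = j")
        case False
        then have "\<And>f g. indicator Bd (f(i:=a), g(i:=t)) = (0::ennreal)"
          by (auto simp: Bd_def split: split_indicator)
        then show ?thesis by simp
      next
        case True
        define U where "U = (\<lambda>k x. if x \<noteq> 0 then real (min (c k x) t) else 0)"
        define W where "W = (\<lambda>x::nat. if x \<le> t then 1 else (0::real))"
        have Unn: "\<And>k x. 0 \<le> U k x" unfolding U_def by simp
        have Wnn: "\<And>x. 0 \<le> W x" unfolding W_def by simp
        have pw: "indicator Bd (f(i:=j), g(i:=t)) \<le> ennreal (1 / real t) * (\<Sum>k\<in>I'. ennreal (U k (f k) * W (g k)))" for f g
        proof (cases "(f(i:=j), g(i:=t)) \<in> Bd")
          case False then show ?thesis by simp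
        next
          case inB: True
          have iR: "i \<in> R_set I (f(i:=j))" using i j by (simp add: R_set_def)
          have D: "{i' \<in> R_set I (f(i:=j)) - {i}. (g(i:=t)) i' \<le> t} = {k \<in> I'. f k \<noteq> 0 \<and> g k \<le> t}"
            by (auto simp: R_set_def I'_def)
          have lt: "t < (\<Sum>k\<in>{k \<in> I'. f k \<noteq> 0 \<and> g k \<le> t}. c k (f k))"
          proof -
            have "psi_out I c (f(i:=j)) (g(i:=t)) i \<noteq> j" using inB by (simp add: Bd_def)
            then have "\<not> (\<Sum>i'\<in>{i' \<in> R_set I (f(i:=j)) - {i}. (g(i:=t)) i' \<le> t}. c i' ((f(i:=j)) i')) \<le> t"
              using iR unfolding psi_out_def by (simp only: fun_upd_same if_True simp_thms) presburger
            moreover have "(\<Sum>i'\<in>{i' \<in> R_set I (f(i:=j)) - {i}. (g(i:=t)) i' \<le> t}. c i' ((f(i:=j)) i'))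
                = (\<Sum>k\<in>{k \<in> I'. f k \<noteq> 0 \<and> g k \<le> t}. c k (f k))"
              unfolding D by (intro sum.cong) (auto simp: I'_def)
            ultimately show ?thesis by simp
          qed
          have "t \<le> (\<Sum>k\<in>{k \<in> I'. f k \<noteq> 0 \<and> g k \<le> t}. min (c k (f k)) t)"
            by (rule sum_min_ge) (use II(3) lt in auto)
          then have "real t \<le> (\<Sum>k\<in>{k \<in> I'. f k \<noteq> 0 \<and> g k \<le> t}. real (min (c k (f k)) t))"
            by (metis of_nat_le_iff of_nat_sum)
          also have "\<dots> = (\<Sum>k\<in>I'. U k (f k) * W (g k))"
            using II(3) by (subst sum.inter_filter) (auto simp: U_def W_def intro!: sum.cong)
          finally have ge: "real t \<le> (\<Sum>k\<in>I'. U k (f k) * W (g k))" .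
          have "ennreal (1 / real t) * (\<Sum>k\<in>I'. ennreal (U k (f k) * W (g k)))
              = ennreal (1 / real t * (\<Sum>k\<in>I'. U k (f k) * W (g k)))"
          proof -
            have "(\<Sum>k\<in>I'. ennreal (U k (f k) * W (g k))) = ennreal (\<Sum>k\<in>I'. U k (f k) * W (g k))"
              by (rule sum_ennreal) (simp add: Unn Wnn)
            moreover have "0 \<le> (\<Sum>k\<in>I'. U k (f k) * W (g k))" by (simp add: sum_nonneg Unn Wnn)
            ultimately show ?thesis using ennreal_mult[of "1 / real t" "\<Sum>k\<in>I'. U k (f k) * W (g k)"] by simp
          qed
          moreover have "1 \<le> 1 / real t * (\<Sum>k\<in>I'. U k (f k) * W (g k))"
            using ge t1 by (simp add: field_simps)
          ultimately have "1 \<le> ennreal (1 / real t) * (\<Sum>k\<in>I'. ennreal (U k (f k) * W (g k)))"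
            by (simp add: ennreal_le_iff[symmetric] del: ennreal_le_iff)
          then show ?thesis by (simp split: split_indicator)
        qed
        have perk: "(\<integral>\<^sup>+g. ennreal (U k (f k) * W (g k)) \<partial>S') = ennreal (U k (f k)) * emeasure (s k) {..t}"
          if k: "k \<in> I'" for k f
        proof -
          have "(\<integral>\<^sup>+g. ennreal (U k (f k) * W (g k)) \<partial>S') = (\<integral>\<^sup>+g. ennreal (U k (f k)) * indicator {..t} (g k) \<partial>S')"
            by (intro nn_integral_cong) (simp add: W_def split: split_indicator)
          also have "\<dots> = ennreal (U k (f k)) * (\<integral>\<^sup>+g. indicator {..t} (g k) \<partial>S')"
            by (simp add: nn_integral_cmult)
          also have "(\<integral>\<^sup>+g. indicator {..t} (g k) \<partial>S') = (\<integral>\<^sup>+x. indicator {..t} x \<partial>s k)"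
            unfolding S'_def by (rule int_component) (use II k in auto)
          also have "\<dots> = emeasure (s k) {..t}" by simp
          finally show ?thesis .
        qed
        have perk2: "(\<integral>\<^sup>+f. ennreal (U k (f k)) \<partial>H') = (\<integral>\<^sup>+x. ennreal (U k x) \<partial>q k)"
          if k: "k \<in> I'" for k
          unfolding H'_def by (rule int_component) (use II k in auto)
        have perk3: "(\<integral>\<^sup>+x. ennreal (U k x) \<partial>q k) * emeasure (s k) {..t} = ennreal (E k t * (\<Sum>t'=1..t. y k t'))"
          if k: "k \<in> I" for k
        proof -
          have "(\<integral>\<^sup>+x. ennreal (U k x) \<partial>q k) = ennreal (ybar y C c B k) * ennreal (E k t)"
            unfolding U_def by (rule q_int'[OF k])
          then have "(\<integral>\<^sup>+x. ennreal (U k x) \<partial>q k) * emeasure (s k) {..t}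
              = ennreal (E k t) * (emeasure (s k) {..t} * ennreal (ybar y C c B k))"
            by (simp add: ac_simps)
          also have "\<dots> = ennreal (E k t) * ennreal (\<Sum>t'=1..t. y k t')" using s_meas[OF k] by simp
          also have "\<dots> = ennreal (E k t * (\<Sum>t'=1..t. y k t'))"
            using Enn by (simp add: ennreal_mult sum_nonneg y_nonneg)
          finally show ?thesis .
        qed
        have "(\<Sum>k\<in>I'. (\<integral>\<^sup>+f. ennreal (U k (f k)) \<partial>H') * emeasure (s k) {..t})
            = (\<Sum>k\<in>I'. ennreal (E k t * (\<Sum>t'=1..t. y k t')))"
          by (intro sum.cong refl) (simp add: perk2 perk3 I'_def)
        also have "\<dots> = ennreal (\<Sum>k\<in>I'. E k t * (\<Sum>t'=1..t. y k t'))"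
          by (rule sum_ennreal) (simp add: Enn sum_nonneg y_nonneg)
        also have "\<dots> \<le> ennreal (l * (2 * real t))"
        proof (rule ennreal_leI)
          have "(\<Sum>k\<in>I'. E k t * (\<Sum>t'=1..t. y k t')) \<le> (\<Sum>k\<in>I. E k t * (\<Sum>t'=1..t. y k t'))"
            using finI by (intro sum_mono2) (auto simp: I'_def Enn sum_nonneg y_nonneg)
          also have "\<dots> \<le> l * (2 * real t)" unfolding E_def using y_knap t1 tC by simp
          finally show "(\<Sum>k\<in>I'. E k t * (\<Sum>t'=1..t. y k t')) \<le> l * (2 * real t)" .
        qed
        finally have sumbound: "(\<Sum>k\<in>I'. (\<integral>\<^sup>+f. ennreal (U k (f k)) \<partial>H') * emeasure (s k) {..t}) \<le> ennreal (l * (2 * real t))" .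
        have "(\<integral>\<^sup>+f. \<integral>\<^sup>+g. indicator Bd (f(i:=a), g(i:=t)) \<partial>S' \<partial>H')
            \<le> (\<integral>\<^sup>+f. \<integral>\<^sup>+g. ennreal (1 / real t) * (\<Sum>k\<in>I'. ennreal (U k (f k) * W (g k))) \<partial>S' \<partial>H')"
          unfolding True by (intro nn_integral_mono pw)
        also have "\<dots> = (\<integral>\<^sup>+f. ennreal (1 / real t) * (\<Sum>k\<in>I'. ennreal (U k (f k)) * emeasure (s k) {..t}) \<partial>H')"
        proof (rule nn_integral_cong)
          fix f
          have "(\<integral>\<^sup>+g. ennreal (1 / real t) * (\<Sum>k\<in>I'. ennreal (U k (f k) * W (g k))) \<partial>S')
              = ennreal (1 / real t) * (\<Sum>k\<in>I'. \<integral>\<^sup>+g. ennreal (U k (f k) * W (g k)) \<partial>S')"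
            by (simp add: nn_integral_cmult nn_integral_sum)
          also have "(\<Sum>k\<in>I'. \<integral>\<^sup>+g. ennreal (U k (f k) * W (g k)) \<partial>S') = (\<Sum>k\<in>I'. ennreal (U k (f k)) * emeasure (s k) {..t})"
            by (intro sum.cong refl perk)
          finally show "(\<integral>\<^sup>+g. ennreal (1 / real t) * (\<Sum>k\<in>I'. ennreal (U k (f k) * W (g k))) \<partial>S')
              = ennreal (1 / real t) * (\<Sum>k\<in>I'. ennreal (U k (f k)) * emeasure (s k) {..t})" .
        qed
        also have "\<dots> = ennreal (1 / real t) * (\<Sum>k\<in>I'. (\<integral>\<^sup>+f. ennreal (U k (f k)) \<partial>H') * emeasure (s k) {..t})"
          by (simp add: nn_integral_cmult nn_integral_sum nn_integral_multc)
        also have "\<dots> \<le> ennreal (1 / real t) * ennreal (l * (2 * real t))"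
          by (intro mult_left_mono sumbound) simp
        also have "\<dots> = ennreal (2 * l)"
          using t1 l0 by (simp add: ennreal_mult[symmetric])
        finally show ?thesis using True by simp
      qed
      have "emeasure P Bd = (\<integral>\<^sup>+x. indicator Bd x \<partial>P)" by simp
      also have "\<dots> = (\<integral>\<^sup>+a. \<integral>\<^sup>+t. \<integral>\<^sup>+f. \<integral>\<^sup>+g. indicator Bd (f(i:=a), g(i:=t)) \<partial>S' \<partial>H' \<partial>s i \<partial>q i)"
        unfolding Pdec by simp
      also have "\<dots> \<le> (\<integral>\<^sup>+a. indicator {j} a * ennreal (2*l) \<partial>q i)"
      proof (rule nn_integral_mono)
        fix a
        have "(\<integral>\<^sup>+t. \<integral>\<^sup>+f. \<integral>\<^sup>+g. indicator Bd (f(i:=a), g(i:=t)) \<partial>S' \<partial>H' \<partial>s i)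
            \<le> (\<integral>\<^sup>+t. indicator {j} a * ennreal (2*l) \<partial>s i)"
        proof (rule nn_integral_mono_AE)
          have "\<forall>t\<in>set_pmf (s i). (\<integral>\<^sup>+f. \<integral>\<^sup>+g. indicator Bd (f(i:=a), g(i:=t)) \<partial>S' \<partial>H') \<le> indicator {j} a * ennreal (2*l)"
          proof
            fix t assume "t \<in> set_pmf (s i)"
            then have "t \<in> {1..C}" using s_supp[OF i] by blast
            then show "(\<integral>\<^sup>+f. \<integral>\<^sup>+g. indicator Bd (f(i:=a), g(i:=t)) \<partial>S' \<partial>H') \<le> indicator {j} a * ennreal (2*l)"
              using inner by simp
          qed
          then show "AE t in measure_pmf (s i). (\<integral>\<^sup>+f. \<integral>\<^sup>+g. indicator Bd (f(i:=a), g(i:=t)) \<partial>S' \<partial>H') \<le> indicator {j} a * ennreal (2*l)"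
            unfolding AE_measure_pmf_iff .
        qed
        also have "\<dots> = indicator {j} a * ennreal (2*l)" by simp
        finally show "(\<integral>\<^sup>+t. \<integral>\<^sup>+f. \<integral>\<^sup>+g. indicator Bd (f(i:=a), g(i:=t)) \<partial>S' \<partial>H' \<partial>s i) \<le> indicator {j} a * ennreal (2*l)" .
      qed
      also have "\<dots> = ennreal (2 * l) * emeasure (q i) {j}"
        by (simp add: nn_integral_multc mult.commute)
      finally show ?thesis .
    qed
    have key: "measure_pmf.prob P Bd \<le> 2 * l * measure_pmf.prob P A"
    proof -
      have "ennreal (measure_pmf.prob P Bd) \<le> ennreal (2 * l) * ennreal (measure_pmf.prob P A)"
        using eB eA by (simp add: measure_pmf.emeasure_eq_measure)
      also have "\<dots> = ennreal (2 * l * measure_pmf.prob P A)" using l0 by (simp add: ennreal_mult)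
      finally show ?thesis using l0 by (simp add: ennreal_le_iff)
    qed
    show "(1 - 2 * l) * measure_pmf.prob (h_dist I p y C c B) {v. v i = j}
        \<le> measure_pmf.prob (bind_pmf (h_dist I p y C c B) (\<lambda>v. map_pmf (\<lambda>w. (v, w)) (psi_b I y C c B v)))
            {(v, w). w i = j \<and> v i = j}"
      unfolding lhs rhs using split key by (simp add: algebra_simps)
  qed
qed

theorem lemma4:
  fixes n B C :: nat and p :: "nat \<Rightarrow> nat pmf" and c :: "nat \<Rightarrow> nat \<Rightarrow> nat"
    and Iout :: "nat set set" and \<beta> :: real and y :: "nat \<Rightarrow> nat \<Rightarrow> real"
  defines "I \<equiv> {1..n}" and "l \<equiv> min \<beta> (1/4)"
  assumes B_pos: "B \<ge> 1" and C_pos: "C \<ge> 1"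
    and states: "\<And>i. i \<in> I \<Longrightarrow> set_pmf (p i) \<subseteq> {1..B}"
    and cost_mono: "\<And>i s s'. i \<in> I \<Longrightarrow> s' \<le> s \<Longrightarrow> c i s' \<le> c i s"
    and Iout_sub: "Iout \<subseteq> Pow I" and Iout_down: "\<And>S T. S \<in> Iout \<Longrightarrow> T \<subseteq> S \<Longrightarrow> T \<in> Iout"
    and beta: "0 \<le> \<beta>" "\<beta> \<le> 1"
    and y_nonneg: "\<And>i t. 0 \<le> y i t"
    and y_supp: "\<And>i t. i \<notin> I \<or> t \<notin> {1..C - c i B} \<Longrightarrow> y i t = 0"
    and y_box: "\<And>i. i \<in> I \<Longrightarrow> ybar y C c B i \<le> l"
    and y_poly: "\<exists>lam :: nat set \<Rightarrow> real. (\<forall>S \<in> Iout. 0 \<le> lam S) \<and> (\<Sum>S \<in> Iout. lam S) = l \<and>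
                   (\<forall>i \<in> I. ybar y C c B i = (\<Sum>S \<in> {S \<in> Iout. i \<in> S}. lam S))"
    and y_knap: "\<And>t. t \<in> {1..C} \<Longrightarrow>
        (\<Sum>i \<in> I. measure_pmf.expectation (p i) (\<lambda>s. real (min (c i s) t)) * (\<Sum>t' = 1..t. y i t'))
          \<le> l * (2 * real t)"
  shows "alpha_CRS I B (h_dist I p y C c B) (psi_b I y C c B) (1 - min (2 * \<beta>) (1/2))
       \<and> monotone_CRS I B (psi_b I y C c B)"
  proof -
  have finI: "finite I" unfolding I_def by simp
  have l0: "0 \<le> l" "l \<le> 1/4" using beta unfolding l_def by auto
  have al: "1 - min (2 * \<beta>) (1/2) = 1 - 2 * l" unfolding l_def by (auto simp: min_def)
  show ?thesis
    unfolding al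
    using alpha_part[OF finI C_pos states y_nonneg y_supp y_box l0(1) l0(2) y_knap] mono_part[OF finI cost_mono]
    by simp
qed

end
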